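(* Let $X$ be a set and let $\mathcal{L}$ and $\mathcal{R}$ be two dual nests on $X$. (1) If $\mathcal{L}$ satisfies (C2) and $\mathcal{R}$ satisfies (C2)*, then $\mathcal{T}_{\mathcal{L}\cup\mathcal{R}}\subseteq\mathcal{T}_{in}^{\mathcal{L}}$. (2) If $\mathcal{L}$ satisfies (C3) and $\mathcal{R}$ satisfies (C3)*, then $\mathcal{T}_{\mathcal{L}\cup\mathcal{R}}=\mathcal{T}_{in}^{\mathcal{L}}$.
   Context: A nest on $X$ is a family of subsets of $X$ totally ordered by inclusion. For a nest $\mathcal{N}$ define $x\triangleleft_{\mathcal{N}} y$ iff there exists $N\in\mathcal{N}$ with $x\in N$, $y\notin N$. Let $x\trianglelefteq_{\mathcal{L}} y$ iff $x=y$ or $x\triangleleft_{\mathcal{L}} y$. Nests $\mathcal{L},\mathcal{R}$ are dual if for all $x,y\in X$: $x\triangleleft_{\mathcal{L}} y$ iff $y\triangleleft_{\mathcal{R}} x$. Suprema and infima are taken with respect to $\trianglelefteq_{\mathcal{L}}$. (C2): every $L\in\mathcal{L}$ has a supremum $\sup L\in X-L$. (C3): for each $x\in X$ there is $L\in\mathcal{L}$ with $\sup L=x\in X-L$, and (C2) holds. (C2)*: every $R\in\mathcal{R}$ has an infimum $\inf R\in X-R$. (C3)*: for each $x\in X$ there is $R\in\mathcal{R}$ with $\inf R=x\in X-R$, and (C2)* holds. For $k\in X$ let ${\uparrow}k=\{y : k\trianglelefteq_{\mathcal{L}} y\}$ and ${\downarrow}k=\{y : y\trianglelefteq_{\mathcal{L}}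 k\}$. The lower topology $\mathcal{T}_l$ is generated by the subbase $\{X-{\uparrow}k : k\in X\}$, the upper topology $\mathcal{T}_U$ by the subbase $\{X-{\downarrow}k : k\in X\}$, and $\mathcal{T}_{in}^{\mathcal{L}}=\mathcal{T}_U\vee\mathcal{T}_l$ is the smallest topology containing both. $\mathcal{T}_{\mathcal{L}\cup\mathcal{R}}$ is the topology generated by $\mathcal{L}\cup\mathcal{R}$ as a subbase. *)

theory Defs
  imports Main
begin

definition nest :: "'a set \<Rightarrow> 'a set set \<Rightarrow> bool" where
  "nest X N \<longleftrightarrow> N \<subseteq> Pow X \<and> (\<forall>A\<in>N. \<forall>B\<in>N. A \<subseteq> B \<or> B \<subseteq> A)"

definition nprec :: "'a set set \<Rightarrow> 'a \<Rightarrow> 'a \<Rightarrow> bool" where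
  "nprec N x y \<longleftrightarrow> (\<exists>A\<in>N. x \<in> A \<and> y \<notin> A)"

definition npreceq :: "'a set set \<Rightarrow> 'a \<Rightarrow> 'a \<Rightarrow> bool" where
  "npreceq N x y \<longleftrightarrow> x = y \<or> nprec N x y"

definition dual_nests :: "'a set \<Rightarrow> 'a set set \<Rightarrow> 'a set set \<Rightarrow> bool" where
  "dual_nests X L R \<longleftrightarrow> (\<forall>x\<in>X. \<forall>y\<in>X. nprec L x y \<longleftrightarrow> nprec R y x)"

definition is_sup :: "'a set \<Rightarrow> 'a set set \<Rightarrow> 'a set \<Rightarrow> 'a \<Rightarrow> bool" where
  "is_sup X L A s \<longleftrightarrow> s \<in> X \<and> (\<forall>a\<in>A. npreceq L a s) \<and>
     (\<forall>u\<in>X. (\<forall>a\<in>A. npreceq L a u) \<longrightarrow> npreceq L s u)"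

definition is_inf :: "'a set \<Rightarrow> 'a set set \<Rightarrow> 'a set \<Rightarrow> 'a \<Rightarrow> bool" where
  "is_inf X L A s \<longleftrightarrow> s \<in> X \<and> (\<forall>a\<in>A. npreceq L s a) \<and>
     (\<forall>u\<in>X. (\<forall>a\<in>A. npreceq L u a) \<longrightarrow> npreceq L u s)"

definition C2 :: "'a set \<Rightarrow> 'a set set \<Rightarrow> bool" where
  "C2 X L \<longleftrightarrow> (\<forall>A\<in>L. \<exists>s. is_sup X L A s \<and> s \<in> X - A)"

definition C3 :: "'a set \<Rightarrow> 'a set set \<Rightarrow> bool" where
  "C3 X L \<longleftrightarrow> (\<forall>x\<in>X. \<exists>A\<in>L. is_sup X L A x \<and> x \<in> X - A) \<and> C2 X L"

text \<open>Starred conditions for R; infima are w.r.t. the order of L.\<close>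

definition C2_star :: "'a set \<Rightarrow> 'a set set \<Rightarrow> 'a set set \<Rightarrow> bool" where
  "C2_star X L R \<longleftrightarrow> (\<forall>B\<in>R. \<exists>s. is_inf X L B s \<and> s \<in> X - B)"

definition C3_star :: "'a set \<Rightarrow> 'a set set \<Rightarrow> 'a set set \<Rightarrow> bool" where
  "C3_star X L R \<longleftrightarrow> (\<forall>x\<in>X. \<exists>B\<in>R. is_inf X L B x \<and> x \<in> X - B) \<and> C2_star X L R"

definition up_set :: "'a set \<Rightarrow> 'a set set \<Rightarrow> 'a \<Rightarrow> 'a set" where
  "up_set X L k = {y \<in> X. npreceq L k y}"

definition down_set :: "'a set \<Rightarrow> 'a set set \<Rightarrow> 'a \<Rightarrow> 'a set" where
  "down_set X L k = {y \<in> X. npreceq L y k}"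

inductive_set gen_top :: "'a set \<Rightarrow> 'a set set \<Rightarrow> 'a set set" for X S where
  carrier: "X \<in> gen_top X S"
| basis: "s \<in> S \<Longrightarrow> s \<in> gen_top X S"
| inter: "a \<in> gen_top X S \<Longrightarrow> b \<in> gen_top X S \<Longrightarrow> a \<inter> b \<in> gen_top X S"
| union: "(\<And>k. k \<in> K \<Longrightarrow> k \<in> gen_top X S) \<Longrightarrow> \<Union>K \<in> gen_top X S"

definition lower_top :: "'a set \<Rightarrow> 'a set set \<Rightarrow> 'a set set" where
  "lower_top X L = gen_top X {X - up_set X L k | k. k \<in> X}"

definition upper_top :: "'a set \<Rightarrow> 'a set set \<Rightarrow> 'a set set" where
  "upper_top X L = gen_top X {X - down_set X L k | k. k \<in> X}"

definition interval_top :: "'a set \<Rightarrow> 'a set set \<Rightarrow> 'a set set" where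
  "interval_top X L = gen_top X (upper_top X L \<union> lower_top X L)"

definition nest_top :: "'a set \<Rightarrow> 'a set set \<Rightarrow> 'a set set \<Rightarrow> 'a set set" where
  "nest_top X L R = gen_top X (L \<union> R)"

end

theory Submission
  imports Defs
begin

lemma gen_top_mono:
  assumes "S \<subseteq> gen_top X S'"
  shows "gen_top X S \<subseteq> gen_top X S'"
proof
  fix a assume "a \<in> gen_top X S"
  then show "a \<in> gen_top X S'"
    by induct (use assms in \<open>auto intro: gen_top.intros\<close>)
qed

lemma sup_eq:
  assumes "nest X L" and "A \<in> L" and "is_sup X L A s" and "s \<notin> A"
  shows "A = X - up_set X L s"
proof
  have AX: "A \<subseteq> X" using assms(1,2) unfolding nest_def by auto
  show "A \<subseteq> X - up_set X L s"
  proof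
    fix y assume y: "y \<in> A"
    have "\<not> nprec L s y"
    proof
      assume "nprec L s y"
      then obtain N where N: "N \<in> L" "s \<in> N" "y \<notin> N" unfolding nprec_def by auto
      then have "N \<subseteq> A \<or> A \<subseteq> N" using assms(1,2) unfolding nest_def by auto
      then show False using N y assms(4) by auto
    qed
    then show "y \<in> X - up_set X L s" using y AX assms(4)
      unfolding up_set_def npreceq_def by auto
  qed
  show "X - up_set X L s \<subseteq> A"
  proof
    fix y assume y: "y \<in> X - up_set X L s"
    show "y \<in> A"
    proof (rule ccontr)
      assume ny: "y \<notin> A"
      have "\<forall>a\<in>A. npreceq L a y"
        using ny assms(2) unfolding npreceq_def nprec_def by auto
      then have "npreceq L s y" using assms(3) y unfolding is_sup_def by auto
      then show False using y unfolding up_set_def by auto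
    qed
  qed
qed

lemma inf_eq:
  assumes "nest X R" and "dual_nests X L R" and "B \<in> R" and "is_inf X L B s" and "s \<notin> B"
  shows "B = X - down_set X L s"
proof
  have BX: "B \<subseteq> X" using assms(1,3) unfolding nest_def by auto
  have sX: "s \<in> X" using assms(4) unfolding is_inf_def by auto
  show "B \<subseteq> X - down_set X L s"
  proof
    fix y assume y: "y \<in> B"
    have "\<not> nprec L y s"
    proof
      assume "nprec L y s"
      then have "nprec R s y" using assms(2) y BX sX unfolding dual_nests_def by auto
      then obtain N where N: "N \<in> R" "s \<in> N" "y \<notin> N" unfolding nprec_def by auto
      then have "N \<subseteq> B \<or> B \<subseteq> N" using assms(1,3) unfolding nest_def by auto
      then show False using N y assms(5) by auto
    qed
    then show "y \<in> X - down_set X L s" using y BX assms(5)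
      unfolding down_set_def npreceq_def by auto
  qed
  show "X - down_set X L s \<subseteq> B"
  proof
    fix y assume y: "y \<in> X - down_set X L s"
    show "y \<in> B"
    proof (rule ccontr)
      assume ny: "y \<notin> B"
      have "\<forall>b\<in>B. npreceq L y b"
      proof
        fix b assume b: "b \<in> B"
        have "nprec R b y" using b ny assms(3) unfolding nprec_def by auto
        then have "nprec L y b" using assms(2) b BX y unfolding dual_nests_def by auto
        then show "npreceq L y b" unfolding npreceq_def by auto
      qed
      then have "npreceq L y s" using assms(4) y unfolding is_inf_def by auto
      then show False using y unfolding down_set_def by auto
    qed
  qed
qed

theorem theorem3p3:
  fixes X :: "'a set" and L R :: "'a set set"
  assumes "nest X L" and "nest X R" and "dual_nests X L R"
  shows "(C2 X L \<and> C2_star X L R \<longrightarrow> nest_top X L R \<subseteq> interval_top X L)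
       \<and> (C3 X L \<and> C3_star X L R \<longrightarrow> nest_top X L R = interval_top X L)"
proof -
  have part1: "nest_top X L R \<subseteq> interval_top X L" if c: "C2 X L" "C2_star X L R"
  proof -
    have "L \<subseteq> interval_top X L"
    proof
      fix A assume A: "A \<in> L"
      then obtain s where s: "is_sup X L A s" "s \<in> X - A" using c(1) unfolding C2_def by blast
      have "A = X - up_set X L s" using sup_eq[OF assms(1) A s(1)] s(2) by auto
      moreover have "s \<in> X" using s by auto
      ultimately have "A \<in> lower_top X L" unfolding lower_top_def
        by (auto intro: gen_top.basis)
      then show "A \<in> interval_top X L" unfolding interval_top_def by (auto intro: gen_top.basis)
    qed
    moreover have "R \<subseteq> interval_top X L"
    proof
      fix B assume B: "B \<in> R"
      then obtain s where s: "is_inf X L B s" "s \<in> X - B" using c(2) unfolding C2_star_def by blast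
      have "B = X - down_set X L s" using inf_eq[OF assms(2,3) B s(1)] s(2) by auto
      moreover have "s \<in> X" using s by auto
      ultimately have "B \<in> upper_top X L" unfolding upper_top_def
        by (auto intro: gen_top.basis)
      then show "B \<in> interval_top X L" unfolding interval_top_def by (auto intro: gen_top.basis)
    qed
    ultimately show ?thesis unfolding nest_top_def interval_top_def
      by (intro gen_top_mono) auto
  qed
  have part2: "interval_top X L \<subseteq> nest_top X L R" if c: "C3 X L" "C3_star X L R"
  proof -
    have "{X - up_set X L k | k. k \<in> X} \<subseteq> L"
    proof
      fix U assume "U \<in> {X - up_set X L k | k. k \<in> X}"
      then obtain k where k: "k \<in> X" "U = X - up_set X L k" by auto
      then obtain A where A: "A \<in> L" "is_sup X L A k" "k \<in> X - A"
        using c(1) unfolding C3_def by blast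
      show "U \<in> L" using sup_eq[OF assms(1) A(1,2)] A k by auto
    qed
    then have lo: "lower_top X L \<subseteq> nest_top X L R" unfolding lower_top_def nest_top_def
      by (intro gen_top_mono) (auto intro: gen_top.basis)
    have "{X - down_set X L k | k. k \<in> X} \<subseteq> R"
    proof
      fix U assume "U \<in> {X - down_set X L k | k. k \<in> X}"
      then obtain k where k: "k \<in> X" "U = X - down_set X L k" by auto
      then obtain B where B: "B \<in> R" "is_inf X L B k" "k \<in> X - B"
        using c(2) unfolding C3_star_def by blast
      show "U \<in> R" using inf_eq[OF assms(2,3) B(1,2)] B k by auto
    qed
    then have up: "upper_top X L \<subseteq> nest_top X L R" unfolding upper_top_def nest_top_def
      by (intro gen_top_mono) (auto intro: gen_top.basis)
    show ?thesis unfolding interval_top_def using lo up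
      by (intro gen_top_mono[of _ X "L \<union> R", folded nest_top_def]) auto
  qed
  show ?thesis
  proof (intro conjI impI)
    assume "C2 X L \<and> C2_star X L R"
    then show "nest_top X L R \<subseteq> interval_top X L" using part1 by auto
  next
    assume h: "C3 X L \<and> C3_star X L R"
    then have "C2 X L" "C2_star X L R" unfolding C3_def C3_star_def by auto
    then show "nest_top X L R = interval_top X L" using part1 part2 h by blast
  qed
qed

end
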